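(* Let $n\equiv 3\pmod 4$ with $n>3$. Let $1\le r\le m$, let $M_r\in\mathfrak{C}_r$, and suppose $\det\tilde M_r>0$. Then the set of elements $E_m\in\mathfrak{E}_m$ with $\det\tilde E_m>0$ is non-empty.
   Context: Fix an integer $n\equiv 3\pmod 4$, $n>3$. For $m\ge1$, $\mathfrak{C}_m$ is the set of symmetric positive definite $m\times m$ integer matrices $C=(c_{ij})$ with $c_{ii}=n$ and $c_{ij}\equiv n\pmod 4$ for all $i,j$. Given a fixed $M_r\in\mathfrak{C}_r$, for $m\ge r$, $\mathfrak{E}_m$ is the set of $E_m\in\mathfrak{C}_m$ whose leading $r\times r$ submatrix is $M_r$. For a square matrix $C$ of order $m$, $\tilde C$ denotes the matrix obtained from $C$ by replacing its $(m,m)$ entry by $3$. *)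

theory Defs
  imports "Jordan_Normal_Form.Determinant"
begin

definition pos_def_int_mat :: "int mat \<Rightarrow> bool" where
  "pos_def_int_mat C \<longleftrightarrow> (\<exists>m. C \<in> carrier_mat m m \<and>
     (\<forall>x \<in> carrier_vec m. x \<noteq> 0\<^sub>v m \<longrightarrow>
        x \<bullet> (map_mat (of_int :: int \<Rightarrow> real) C *\<^sub>v x) > 0))"

definition frakC :: "int \<Rightarrow> nat \<Rightarrow> int mat set" where
  "frakC n m = {C. C \<in> carrier_mat m m \<and> transpose_mat C = C \<and> pos_def_int_mat C \<and>
     (\<forall>i<m. C $$ (i,i) = n) \<and> (\<forall>i<m. \<forall>j<m. C $$ (i,j) mod 4 = n mod 4)}"

definition frakE :: "int \<Rightarrow> int mat \<Rightarrow> nat \<Rightarrow> int mat set" where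
  "frakE n M m = {E \<in> frakC n m. \<forall>i < dim_row M. \<forall>j < dim_row M. E $$ (i,j) = M $$ (i,j)}"

definition tilde :: "int mat \<Rightarrow> int mat" where
  "tilde C = mat (dim_row C) (dim_col C)
     (\<lambda>(i,j). if i = dim_row C - 1 \<and> j = dim_col C - 1 then 3 else C $$ (i,j))"

end

theory Submission imports Defs begin

definition Bf :: "nat \<Rightarrow> real mat \<Rightarrow> (nat \<Rightarrow> real) \<Rightarrow> (nat \<Rightarrow> real) \<Rightarrow> real" where
  "Bf k A x y = (\<Sum>i<k. \<Sum>j<k. x i * A $$ (i,j) * y j)"

definition pdf :: "nat \<Rightarrow> real mat \<Rightarrow> bool" where
  "pdf k A \<longleftrightarrow> (\<forall>x. (\<exists>i<k. x i \<noteq> 0) \<longrightarrow> Bf k A x x > 0)"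

lemma Bf_zero: assumes "\<forall>i<k. x i = 0" shows "Bf k A x y = 0"
  using assms unfolding Bf_def by simp

lemma pdf_nonneg: assumes "pdf k A" shows "Bf k A x x \<ge> 0"
proof (cases "\<exists>i<k. x i \<noteq> 0")
  case True then show ?thesis using assms unfolding pdf_def by (meson less_imp_le)
next
  case False then show ?thesis using Bf_zero[of k x] by auto
qed

lemma Bf_mv: "Bf k A x y = (\<Sum>i<k. x i * (\<Sum>j<k. A $$ (i,j) * y j))"
  unfolding Bf_def by (simp add: sum_distrib_left mult.assoc)

lemma Bf_lin_l: "Bf k A (\<lambda>i. a * u i + w i) z = a * Bf k A u z + Bf k A w z"
  unfolding Bf_def by (simp add: algebra_simps sum.distrib sum_distrib_left)

lemma Bf_lin_r: "Bf k A z (\<lambda>i. a * u i + w i) = a * Bf k A z u + Bf k A z w"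
  unfolding Bf_def by (simp add: algebra_simps sum.distrib sum_distrib_left)

lemma Bf_sym: assumes "\<forall>i<k. \<forall>j<k. A $$ (i,j) = A $$ (j,i)"
  shows "Bf k A x y = Bf k A y x"
proof -
  have "Bf k A x y = (\<Sum>j<k. \<Sum>i<k. x i * A $$ (i,j) * y j)"
    unfolding Bf_def by (rule sum.swap)
  also have "\<dots> = Bf k A y x" unfolding Bf_def
    using assms by (intro sum.cong refl) (auto simp: mult.commute mult.left_commute)
  finally show ?thesis .
qed

lemma adj_col: assumes A: "(A::real mat) \<in> carrier_mat n n" and i: "i < n" and l: "l < n"
  shows "(\<Sum>j<n. A $$ (i,j) * cofactor A l j) = (if i = l then det A else 0)"
proof -
  have aA: "adj_mat A \<in> carrier_mat n n" by (rule adj_mat(1)[OF A])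
  have "(A * adj_mat A) $$ (i,l) = (det A \<cdot>\<^sub>m 1\<^sub>m n) $$ (i,l)" using adj_mat(2)[OF A] by simp
  also have "\<dots> = (if i = l then det A else 0)" using i l by simp
  finally have 1: "(A * adj_mat A) $$ (i,l) = (if i = l then det A else 0)" .
  have "(A * adj_mat A) $$ (i,l) = row A i \<bullet> col (adj_mat A) l"
    using A aA i l by simp
  also have "\<dots> = (\<Sum>j\<in>{0..<n}. row A i $ j * col (adj_mat A) l $ j)"
    unfolding scalar_prod_def using aA by simp
  also have "\<dots> = (\<Sum>j<n. A $$ (i,j) * cofactor A l j)"
    using A aA i l by (intro sum.cong) (auto simp: adj_mat_def)
  finally show ?thesis using 1 by simp
qed

lemma pdf_delete: assumes A: "A \<in> carrier_mat (Suc k) (Suc k)" and p: "pdf (Suc k) A"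
  shows "pdf k (mat_delete A k k)"
  unfolding pdf_def
proof (intro allI impI)
  fix y :: "nat \<Rightarrow> real" assume "\<exists>i<k. y i \<noteq> 0"
  then obtain i where i: "i < k" "y i \<noteq> 0" by auto
  define y' where "y' = (\<lambda>i. if i < k then y i else 0)"
  have "\<exists>i<Suc k. y' i \<noteq> 0" using i unfolding y'_def by (intro exI[of _ i]) auto
  then have "Bf (Suc k) A y' y' > 0" using p unfolding pdf_def by blast
  also have "Bf (Suc k) A y' y' = (\<Sum>i<k. \<Sum>j<k. y i * A $$ (i,j) * y j)"
    unfolding Bf_def y'_def by (simp add: lessThan_Suc)
  also have "\<dots> = Bf k (mat_delete A k k) y y"
    unfolding Bf_def using A by (intro sum.cong refl) (simp add: mat_delete_def)
  finally show "Bf k (mat_delete A k k) y y > 0" .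
qed

lemma det_pos: "A \<in> carrier_mat k k \<Longrightarrow> pdf k A \<Longrightarrow> det A > 0"
proof (induction k arbitrary: A)
  case 0
  have "A = 1\<^sub>m 0" by (rule eq_matI) (use 0(1) in auto)
  then show ?case by simp
next
  case (Suc k)
  define D where "D = mat_delete A k k"
  have D: "D \<in> carrier_mat k k" using mat_delete_carrier[OF Suc.prems(1), of k k] unfolding D_def by simp
  have pD: "pdf k D" using pdf_delete[OF Suc.prems] unfolding D_def .
  have dD: "det D > 0" by (rule Suc.IH[OF D pD])
  define v where "v = (\<lambda>i. cofactor A k i)"
  have m1: "(-1::real)^(k+k) = 1" by (simp add: mult_2[symmetric] power_mult)
  have vk: "v k = det D" unfolding v_def cofactor_def D_def by (simp only: m1 mult_1)
  have "Bf (Suc k) A v v = (\<Sum>i<Suc k. v i * (if i = k then det A else 0))"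
    unfolding Bf_mv
  proof (rule sum.cong[OF refl])
    fix i assume "i \<in> {..<Suc k}"
    then have "(\<Sum>j<Suc k. A $$ (i,j) * v j) = (if i = k then det A else 0)"
      unfolding v_def by (intro adj_col[OF Suc.prems(1)]) auto
    then show "v i * (\<Sum>j<Suc k. A $$ (i,j) * v j) = v i * (if i = k then det A else 0)"
      by (simp only:)
  qed
  also have "\<dots> = det D * det A" using vk by simp
  finally have "Bf (Suc k) A v v = det D * det A" .
  moreover have "\<exists>i<Suc k. v i \<noteq> 0" using vk dD by auto
  then have "Bf (Suc k) A v v > 0" using Suc.prems(2) unfolding pdf_def by blast
  ultimately show ?case using dD by (simp add: zero_less_mult_iff)
qed

lemma pdf_downdate:
  fixes A N :: "real mat" and c :: real
  assumes A: "A \<in> carrier_mat (Suc k) (Suc k)"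
    and sym: "\<forall>i<Suc k. \<forall>j<Suc k. A $$ (i,j) = A $$ (j,i)"
    and p: "pdf (Suc k) A"
    and N: "N \<in> carrier_mat (Suc k) (Suc k)"
    and Ne: "\<forall>i<Suc k. \<forall>j<Suc k. N $$ (i,j) = A $$ (i,j) - (if i = k \<and> j = k then c else 0)"
    and dN: "det N > 0"
  shows "pdf (Suc k) N"
proof -
  define D where "D = mat_delete A k k"
  have D: "D \<in> carrier_mat k k" using mat_delete_carrier[OF A, of k k] unfolding D_def by simp
  have pD: "pdf k D" using pdf_delete[OF A p] unfolding D_def .
  have dD: "det D > 0" by (rule det_pos[OF D pD])
  define v where "v = (\<lambda>i. cofactor A k i)"
  have m1: "(-1::real)^(k+k) = 1" by (simp add: mult_2[symmetric] power_mult)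
  have vk: "v k = det D" unfolding v_def cofactor_def D_def by (simp only: m1 mult_1)
  have Av: "(\<Sum>j<Suc k. A $$ (i,j) * v j) = (if i = k then det A else 0)" if "i < Suc k" for i
    unfolding v_def using that by (intro adj_col[OF A]) auto
  have cof: "cofactor N k j = cofactor A k j" if "j < Suc k" for j
  proof -
    have "mat_delete N k j = mat_delete A k j"
      using A N Ne that by (intro eq_matI) (auto simp: mat_delete_def)
    then show ?thesis unfolding cofactor_def by simp
  qed
  have "det N = (\<Sum>j<Suc k. N $$ (k,j) * cofactor N k j)"
    by (rule laplace_expansion_row[OF N]) simp
  also have "\<dots> = (\<Sum>j<Suc k. A $$ (k,j) * cofactor A k j - (if j = k then c * det D else 0))"
  proof (rule sum.cong[OF refl])
    fix j assume "j \<in> {..<Suc k}"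
    then have j: "j < Suc k" by simp
    have "N $$ (k,j) = A $$ (k,j) - (if j = k then c else 0)" using Ne j by simp
    moreover have "cofactor A k k = det D" using vk unfolding v_def .
    ultimately show "N $$ (k,j) * cofactor N k j = A $$ (k,j) * cofactor A k j - (if j = k then c * det D else 0)"
      using cof[OF j] by (cases "j = k") (auto simp: algebra_simps, metis distrib_left mult.commute)
  qed
  also have "\<dots> = (\<Sum>j<Suc k. A $$ (k,j) * cofactor A k j) - c * det D"
    by (simp add: sum_subtractf)
  also have "(\<Sum>j<Suc k. A $$ (k,j) * cofactor A k j) = det A"
    by (rule laplace_expansion_row[OF A, symmetric]) simp
  finally have detN: "det N = det A - c * det D" .
  have Bvv: "Bf (Suc k) A w v = w k * det A" for w
  proof -
    have "Bf (Suc k) A w v = (\<Sum>i<Suc k. w i * (if i = k then det A else 0))"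
      unfolding Bf_mv
    proof (rule sum.cong[OF refl])
      fix i assume "i \<in> {..<Suc k}"
      then show "w i * (\<Sum>j<Suc k. A $$ (i,j) * v j) = w i * (if i = k then det A else 0)"
        using Av[of i] by (simp only: lessThan_iff)
    qed
    also have "\<dots> = w k * det A" by simp
    finally show ?thesis .
  qed
  have BN: "Bf (Suc k) N y y = Bf (Suc k) A y y - c * (y k)^2" for y
  proof -
    have "Bf (Suc k) N y y = (\<Sum>i<Suc k. \<Sum>j<Suc k. y i * A $$ (i,j) * y j
          - (if i = k then (if j = k then c * (y k)^2 else 0) else 0))"
      unfolding Bf_def
    proof (intro sum.cong refl)
      fix i j assume "i \<in> {..<Suc k}" "j \<in> {..<Suc k}"
      then have "N $$ (i,j) = A $$ (i,j) - (if i = k \<and> j = k then c else 0)" using Ne by simp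
      then show "y i * N $$ (i,j) * y j = y i * A $$ (i,j) * y j
          - (if i = k then (if j = k then c * (y k)^2 else 0) else 0)"
        by (cases "i = k"; cases "j = k") (simp_all add: power2_eq_square right_diff_distrib left_diff_distrib)
    qed
    also have "\<dots> = Bf (Suc k) A y y - c * (y k)^2"
      unfolding Bf_def by (simp add: sum_subtractf)
    finally show ?thesis .
  qed
  show ?thesis unfolding pdf_def
  proof (intro allI impI)
    fix y :: "nat \<Rightarrow> real" assume ex: "\<exists>i<Suc k. y i \<noteq> 0"
    define a where "a = y k / det D"
    define w where "w = (\<lambda>i. y i - a * v i)"
    have yw: "y = (\<lambda>i. a * v i + w i)" unfolding w_def by auto
    have wk: "w k = 0" unfolding w_def a_def using vk dD by simp
    have "Bf (Suc k) A y y = a * (a * Bf (Suc k) A v v + Bf (Suc k) A v w)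
         + (a * Bf (Suc k) A w v + Bf (Suc k) A w w)"
      by (subst (1 2) yw) (simp only: Bf_lin_l Bf_lin_r)
    also have "Bf (Suc k) A v w = Bf (Suc k) A w v" by (rule Bf_sym[OF sym])
    finally have "Bf (Suc k) A y y = a * a * (det D * det A) + Bf (Suc k) A w w"
      using Bvv[of v] Bvv[of w] wk vk by (simp add: algebra_simps)
    also have "a * a * (det D * det A) = (y k)^2 * det A / det D"
      unfolding a_def using dD by (simp add: power2_eq_square field_simps)
    finally have e1: "Bf (Suc k) A y y = (y k)^2 * det A / det D + Bf (Suc k) A w w" .
    have "Bf (Suc k) N y y = (y k)^2 * det A / det D + Bf (Suc k) A w w - c * (y k)^2"
      using BN[of y] e1 by simp
    also have "\<dots> = (y k)^2 * (det A - c * det D) / det D + Bf (Suc k) A w w"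
      using dD by (simp add: field_simps)
    also have "\<dots> = (y k)^2 * det N / det D + Bf (Suc k) A w w" using detN by simp
    finally have eq: "Bf (Suc k) N y y = (y k)^2 * det N / det D + Bf (Suc k) A w w" .
    show "Bf (Suc k) N y y > 0"
    proof (cases "y k = 0")
      case True
      then have "w = y" unfolding w_def a_def by simp
      then have "Bf (Suc k) A w w > 0" using ex p unfolding pdf_def by blast
      then show ?thesis using eq True by simp
    next
      case False
      then have "(y k)^2 * det N / det D > 0" using dN dD by simp
      moreover have "Bf (Suc k) A w w \<ge> 0" by (rule pdf_nonneg[OF p])
      ultimately show ?thesis using eq by simp
    qed
  qed
qed

lemma group_sum:
  fixes x :: "nat \<Rightarrow> real" and f :: "nat \<Rightarrow> nat"
  assumes "\<forall>i<m. f i < r"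
  shows "(\<Sum>i<m. x i * g (f i)) = (\<Sum>a<r. (\<Sum>i<m. if f i = a then x i else 0) * g a)"
proof -
  have "(\<Sum>a<r. (\<Sum>i<m. if f i = a then x i else 0) * g a)
      = (\<Sum>a<r. \<Sum>i<m. if f i = a then x i * g a else 0)"
    by (simp add: sum_distrib_right) (intro sum.cong refl, simp)
  also have "\<dots> = (\<Sum>i<m. \<Sum>a<r. if f i = a then x i * g a else 0)" by (rule sum.swap)
  also have "\<dots> = (\<Sum>i<m. x i * g (f i))"
  proof (rule sum.cong[OF refl])
    fix i assume "i \<in> {..<m}"
    then have "f i \<in> {..<r}" using assms by simp
    have "(\<Sum>a<r. if f i = a then x i * g a else 0) = (if f i \<in> {..<r} then x i * g (f i) else 0)"
      by (rule sum.delta') simp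
    then show "(\<Sum>a<r. if f i = a then x i * g a else 0) = x i * g (f i)"
      using \<open>f i \<in> {..<r}\<close> by simp
  qed
  finally show ?thesis by simp
qed

lemma Bf_group:
  fixes G Nm :: "real mat" and d :: real and f :: "nat \<Rightarrow> nat"
  assumes f: "\<forall>i<m. f i < r"
    and G: "\<forall>i<m. \<forall>j<m. G $$ (i,j) = Nm $$ (f i, f j) + (if i = j \<and> i \<in> S then d else 0)"
    and S: "S \<subseteq> {..<m}"
  shows "Bf m G x x = Bf r Nm (\<lambda>a. \<Sum>i<m. if f i = a then x i else 0) (\<lambda>a. \<Sum>i<m. if f i = a then x i else 0)
     + d * (\<Sum>i\<in>S. (x i)^2)"
proof -
  define y where "y = (\<lambda>a. \<Sum>i<m. if f i = a then x i else 0)"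
  have "Bf m G x x = (\<Sum>i<m. \<Sum>j<m. x i * Nm $$ (f i, f j) * x j
      + (if i = j \<and> i \<in> S then d * x i * x j else 0))"
    unfolding Bf_def using G by (intro sum.cong refl) (auto simp: algebra_simps)
  also have "\<dots> = (\<Sum>i<m. \<Sum>j<m. x i * Nm $$ (f i, f j) * x j)
      + (\<Sum>i<m. \<Sum>j<m. (if i = j \<and> i \<in> S then d * x i * x j else 0))"
    by (simp add: sum.distrib)
  also have "(\<Sum>i<m. \<Sum>j<m. (if i = j \<and> i \<in> S then d * x i * x j else 0))
      = (\<Sum>i<m. if i \<in> S then d * (x i)^2 else 0)"
  proof (rule sum.cong[OF refl])
    fix i assume i: "i \<in> {..<m}"
    have "(\<Sum>j<m. (if i = j \<and> i \<in> S then d * x i * x j else 0))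
       = (\<Sum>j<m. (if i = j then (if i \<in> S then d * x i * x j else 0) else 0))"
      by (intro sum.cong refl) auto
    also have "\<dots> = (if i \<in> S then d * (x i)^2 else 0)" using i
      by (simp add: sum.delta sum.delta' power2_eq_square)
    finally show "(\<Sum>j<m. (if i = j \<and> i \<in> S then d * x i * x j else 0)) = (if i \<in> S then d * (x i)^2 else 0)" .
  qed
  also have "(\<Sum>i<m. if i \<in> S then d * (x i)^2 else 0) = d * (\<Sum>i\<in>S. (x i)^2)"
  proof -
    have "(\<Sum>i<m. if i \<in> S then d * (x i)^2 else 0) = (\<Sum>i\<in>{..<m} \<inter> S. d * (x i)^2)"
      by (simp add: sum.inter_restrict)
    also have "{..<m} \<inter> S = S" using S by auto
    finally show ?thesis by (simp add: sum_distrib_left)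
  qed
  also have "(\<Sum>i<m. \<Sum>j<m. x i * Nm $$ (f i, f j) * x j)
       = (\<Sum>i<m. x i * (\<Sum>b<r. y b * Nm $$ (f i, b)))"
  proof (rule sum.cong[OF refl])
    fix i assume "i \<in> {..<m}"
    have "(\<Sum>j<m. x i * Nm $$ (f i, f j) * x j) = x i * (\<Sum>j<m. x j * Nm $$ (f i, f j))"
      by (simp add: sum_distrib_left algebra_simps)
    also have "(\<Sum>j<m. x j * Nm $$ (f i, f j)) = (\<Sum>b<r. y b * Nm $$ (f i, b))"
      unfolding y_def by (rule group_sum[OF f])
    finally show "(\<Sum>j<m. x i * Nm $$ (f i, f j) * x j) = x i * (\<Sum>b<r. y b * Nm $$ (f i, b))" .
  qed
  also have "\<dots> = (\<Sum>a<r. y a * (\<Sum>b<r. y b * Nm $$ (a, b)))"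
    unfolding y_def by (rule group_sum[OF f])
  also have "\<dots> = Bf r Nm y y"
    unfolding Bf_def by (simp add: sum_distrib_left algebra_simps)
  finally show ?thesis unfolding y_def .
qed

lemma pdi_from:
  assumes C: "C \<in> carrier_mat m m" and p: "pdf m (map_mat real_of_int C)"
  shows "pos_def_int_mat C"
  unfolding pos_def_int_mat_def
proof (intro exI[of _ m] conjI ballI impI)
  show "C \<in> carrier_mat m m" by fact
  fix x :: "real vec" assume x: "x \<in> carrier_vec m" and x0: "x \<noteq> 0\<^sub>v m"
  have "\<exists>i<m. x $ i \<noteq> 0"
  proof (rule ccontr)
    assume "\<not> ?thesis"
    then have "x = 0\<^sub>v m" using x by (intro eq_vecI) auto
    then show False using x0 by simp
  qed
  then have "Bf m (map_mat real_of_int C) (\<lambda>i. x $ i) (\<lambda>i. x $ i) > 0" using p unfolding pdf_def by blast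
  also have "Bf m (map_mat real_of_int C) (\<lambda>i. x $ i) (\<lambda>i. x $ i)
      = x \<bullet> (map_mat real_of_int C *\<^sub>v x)"
    unfolding Bf_mv scalar_prod_def using C x
    by (intro sum.cong) (auto simp: scalar_prod_def atLeast0LessThan)
  finally show "x \<bullet> (map_mat real_of_int C *\<^sub>v x) > 0" .
qed

lemma pdi_to:
  assumes C: "C \<in> carrier_mat m m" and p: "pos_def_int_mat C"
  shows "pdf m (map_mat real_of_int C)"
  unfolding pdf_def
proof (intro allI impI)
  fix y :: "nat \<Rightarrow> real" assume "\<exists>i<m. y i \<noteq> 0"
  then obtain i where i: "i < m" "y i \<noteq> 0" by auto
  obtain m' where m': "C \<in> carrier_mat m' m'" and
    pp: "\<forall>x \<in> carrier_vec m'. x \<noteq> 0\<^sub>v m' \<longrightarrow> x \<bullet> (map_mat of_int C *\<^sub>v x) > (0::real)"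
    using p unfolding pos_def_int_mat_def by blast
  have mm: "m' = m" using m' C by auto
  define x where "x = vec m y"
  have x: "x \<in> carrier_vec m" unfolding x_def by simp
  have "x \<noteq> 0\<^sub>v m"
  proof
    assume "x = 0\<^sub>v m"
    then have "x $ i = 0" using i by simp
    then show False using i unfolding x_def by simp
  qed
  then have "x \<bullet> (map_mat real_of_int C *\<^sub>v x) > 0" using pp x mm by blast
  also have "x \<bullet> (map_mat real_of_int C *\<^sub>v x) = Bf m (map_mat real_of_int C) y y"
    unfolding Bf_mv scalar_prod_def using C x
    by (intro sum.cong) (auto simp: scalar_prod_def atLeast0LessThan x_def)
  finally show "Bf m (map_mat real_of_int C) y y > 0" .
qed

lemma pos_group:
  fixes Nm :: "real mat" and d :: real and x :: "nat \<Rightarrow> real"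
  assumes r1: "1 \<le> r" and rm: "r \<le> m" and pN: "pdf r Nm" and d: "d > 0"
    and S1: "{r-1..<m-1} \<subseteq> S" and S2: "S \<subseteq> {..<m}" and ex: "\<exists>i<m. x i \<noteq> 0"
  shows "Bf r Nm (\<lambda>a. \<Sum>i<m. if min i (r-1) = a then x i else 0) (\<lambda>a. \<Sum>i<m. if min i (r-1) = a then x i else 0)
     + d * (\<Sum>i\<in>S. (x i)^2) > 0"
proof -
  define y where "y = (\<lambda>a. \<Sum>i<m. if min i (r-1) = a then x i else 0)"
  have finS: "finite S" using S2 finite_subset by blast
  have nn1: "Bf r Nm y y \<ge> 0" by (rule pdf_nonneg[OF pN])
  have nn2: "(\<Sum>i\<in>S. (x i)^2) \<ge> 0" by (intro sum_nonneg) auto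
  have main: "Bf r Nm y y + d * (\<Sum>i\<in>S. (x i)^2) > 0"
  proof (cases "\<exists>a<r. y a \<noteq> 0")
    case True
    then have "Bf r Nm y y > 0" using pN unfolding pdf_def by blast
    then show ?thesis using nn2 d by (simp add: add_pos_nonneg)
  next
    case False
    then have y0: "\<forall>a<r. y a = 0" by auto
    have low: "x j = 0" if j: "j < r - 1" for j
    proof -
      have "y j = (\<Sum>i<m. if i = j then x j else 0)"
        unfolding y_def using j by (intro sum.cong refl) (auto simp: min_def)
      also have "\<dots> = x j" using j rm by simp
      finally show ?thesis using y0 j by simp
    qed
    have "\<exists>i\<in>S. x i \<noteq> 0"
    proof (rule ccontr)
      assume "\<not> ?thesis"
      then have z: "x j = 0" if "j < m" "j \<noteq> m - 1" for j
      proof (cases "j < r - 1")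
        case True then show ?thesis using low by simp
      next
        case False
        then have "j \<in> {r-1..<m-1}" using that by auto
        then have "j \<in> S" using S1 by blast
        then show ?thesis using \<open>\<not> (\<exists>i\<in>S. x i \<noteq> 0)\<close> by blast
      qed
      have "y (r-1) = (\<Sum>i<m. if i = m - 1 then x (m-1) else 0)"
        unfolding y_def using z rm by (intro sum.cong refl) (auto simp: min_def)
      also have "\<dots> = x (m-1)" using r1 rm by simp
      finally have "x (m-1) = 0" using y0 r1 by simp
      then show False using ex z by (metis)
    qed
    then obtain i where i: "i \<in> S" "x i \<noteq> 0" by auto
    have "(x i)^2 \<le> (\<Sum>i\<in>S. (x i)^2)" by (rule member_le_sum[OF i(1)]) (auto simp: finS)
    moreover have "(x i)^2 > 0" using i by simp
    ultimately show ?thesis using nn1 d by (smt (verit) mult_pos_pos)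
  qed
  then show ?thesis unfolding y_def .
qed

theorem theorem6:
  fixes n :: int and r m :: nat and M :: "int mat"
  assumes "n mod 4 = 3" and "n > 3"
    and "1 \<le> r" and "r \<le> m"
    and "M \<in> frakC n r"
    and "det (tilde M) > 0"
  shows "{E \<in> frakE n M m. det (tilde E) > 0} \<noteq> {}"
proof -
  note n4 = assms(1) and n3 = assms(2) and r1 = assms(3) and rm = assms(4) and dtM = assms(6)
  have Mc: "M \<in> carrier_mat r r" and Msym: "transpose_mat M = M" and pM: "pos_def_int_mat M"
    and Mdiag: "\<forall>i<r. M $$ (i,i) = n" and Mmod: "\<forall>i<r. \<forall>j<r. M $$ (i,j) mod 4 = n mod 4"
    using assms(5) unfolding frakC_def by auto
  have Ms: "M $$ (i,j) = M $$ (j,i)" if "i < r" "j < r" for i j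
  proof -
    have "transpose_mat M $$ (i,j) = M $$ (j,i)" using Mc that by simp
    then show ?thesis using Msym by simp
  qed
  define f where "f = (\<lambda>i::nat. min i (r-1))"
  have fr: "\<forall>i<m. f i < r" using r1 unfolding f_def by auto
  define E where "E = mat m m (\<lambda>(i,j). if i = j then n else if f i = f j then 3 else M $$ (f i, f j))"
  have Ec: "E \<in> carrier_mat m m" unfolding E_def by simp
  have Ee: "E $$ (i,j) = (if i = j then n else if f i = f j then 3 else M $$ (f i, f j))"
    if "i < m" "j < m" for i j using that unfolding E_def by simp
  define T where "T = tilde E"
  have Tc: "T \<in> carrier_mat m m" unfolding T_def tilde_def using Ec by simp
  have Te: "T $$ (i,j) = (if i = m - 1 \<and> j = m - 1 then 3 else E $$ (i,j))"
    if "i < m" "j < m" for i j using that Ec unfolding T_def tilde_def by simp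
  define tM where "tM = tilde M"
  have tMc: "tM \<in> carrier_mat r r" unfolding tM_def tilde_def using Mc by simp
  have tMe: "tM $$ (a,b) = (if a = r - 1 \<and> b = r - 1 then 3 else M $$ (a,b))"
    if "a < r" "b < r" for a b using that Mc unfolding tM_def tilde_def by simp
  define Nm where "Nm = map_mat real_of_int tM"
  have Nmc: "Nm \<in> carrier_mat r r" unfolding Nm_def using tMc by simp
  have Nme: "Nm $$ (a,b) = (if a = r - 1 \<and> b = r - 1 then 3 else real_of_int (M $$ (a,b)))"
    if "a < r" "b < r" for a b using that tMc tMe unfolding Nm_def by simp
  define d where "d = real_of_int n - 3"
  have d0: "d > 0" unfolding d_def using n3 by simp
  obtain k where k: "r = Suc k" using r1 by (cases r) auto
  have pNm: "pdf r Nm"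
  proof -
    let ?A = "map_mat real_of_int M"
    have Ac: "?A \<in> carrier_mat (Suc k) (Suc k)" using Mc k by simp
    have As: "\<forall>i<Suc k. \<forall>j<Suc k. ?A $$ (i,j) = ?A $$ (j,i)" using Mc Ms k by simp
    have pA: "pdf (Suc k) ?A" using pdi_to[OF Mc pM] k by simp
    have Ne: "\<forall>i<Suc k. \<forall>j<Suc k. Nm $$ (i,j) = ?A $$ (i,j) - (if i = k \<and> j = k then d else 0)"
    proof (intro allI impI)
      fix i j assume ij: "i < Suc k" "j < Suc k"
      show "Nm $$ (i,j) = ?A $$ (i,j) - (if i = k \<and> j = k then d else 0)"
      proof (cases "i = k \<and> j = k")
        case True
        then have "M $$ (i,j) = n" using Mdiag ij k by simp
        then show ?thesis using True ij k Mc Nme[of i j] unfolding d_def by simp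
      next
        case False
        then show ?thesis using ij k Mc Nme[of i j] by auto
      qed
    qed
    have "det Nm = real_of_int (det tM)" unfolding Nm_def by (simp add: of_int_hom.hom_det)
    then have dN: "det Nm > 0" using dtM unfolding tM_def by simp
    show ?thesis using pdf_downdate[OF Ac As pA _ Ne dN] Nmc k by simp
  qed
  have Ere: "map_mat real_of_int E $$ (i,j) = Nm $$ (f i, f j) + (if i = j \<and> i \<in> {r-1..<m} then d else 0)"
    if ij: "i < m" "j < m" for i j
  proof -
    have fi: "f i < r" "f j < r" using fr ij by auto
    have "map_mat real_of_int E $$ (i,j) = real_of_int (E $$ (i,j))" using Ec ij by simp
    also have "\<dots> = Nm $$ (f i, f j) + (if i = j \<and> i \<in> {r-1..<m} then d else 0)"
      unfolding Ee[OF ij] Nme[OF fi] using Mdiag ij r1 unfolding d_def f_def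
      by (auto simp: min_def)
    finally show ?thesis .
  qed
  have TrE: "map_mat real_of_int T $$ (i,j) = Nm $$ (f i, f j) + (if i = j \<and> i \<in> {r-1..<m-1} then d else 0)"
    if ij: "i < m" "j < m" for i j
  proof -
    have fi: "f i < r" "f j < r" using fr ij by auto
    have "map_mat real_of_int T $$ (i,j) = real_of_int (T $$ (i,j))" using Tc ij by simp
    also have "\<dots> = Nm $$ (f i, f j) + (if i = j \<and> i \<in> {r-1..<m-1} then d else 0)"
      unfolding Te[OF ij] Ee[OF ij] Nme[OF fi] using Mdiag ij r1 rm unfolding d_def f_def
      by (auto simp: min_def)
    finally show ?thesis .
  qed
  have pE: "pdf m (map_mat real_of_int E)" unfolding pdf_def
  proof (intro allI impI)
    fix x :: "nat \<Rightarrow> real" assume ex: "\<exists>i<m. x i \<noteq> 0"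
    have "Bf m (map_mat real_of_int E) x x = Bf r Nm (\<lambda>a. \<Sum>i<m. if f i = a then x i else 0) (\<lambda>a. \<Sum>i<m. if f i = a then x i else 0)
     + d * (\<Sum>i\<in>{r-1..<m}. (x i)^2)"
      by (rule Bf_group[OF fr]) (use Ere in auto)
    also have "\<dots> > 0" unfolding f_def by (rule pos_group[OF r1 rm pNm d0 _ _ ex]) auto
    finally show "Bf m (map_mat real_of_int E) x x > 0" .
  qed
  have pT: "pdf m (map_mat real_of_int T)" unfolding pdf_def
  proof (intro allI impI)
    fix x :: "nat \<Rightarrow> real" assume ex: "\<exists>i<m. x i \<noteq> 0"
    have "Bf m (map_mat real_of_int T) x x = Bf r Nm (\<lambda>a. \<Sum>i<m. if f i = a then x i else 0) (\<lambda>a. \<Sum>i<m. if f i = a then x i else 0)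
     + d * (\<Sum>i\<in>{r-1..<m-1}. (x i)^2)"
      by (rule Bf_group[OF fr]) (use TrE in auto)
    also have "\<dots> > 0" unfolding f_def by (rule pos_group[OF r1 rm pNm d0 _ _ ex]) auto
    finally show "Bf m (map_mat real_of_int T) x x > 0" .
  qed
  have "real_of_int (det T) = det (map_mat real_of_int T)" by (simp add: of_int_hom.hom_det)
  also have "\<dots> > 0" by (rule det_pos[OF _ pT]) (use Tc in simp)
  finally have dT: "det (tilde E) > 0" unfolding T_def by simp
  have Esym: "transpose_mat E = E"
  proof (rule eq_matI)
    fix i j assume ij: "i < dim_row E" "j < dim_col E"
    then have ij': "i < m" "j < m" using Ec by auto
    have fi: "f i < r" "f j < r" using fr ij' by auto
    show "transpose_mat E $$ (i,j) = E $$ (i,j)"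
      using ij Ec Ee[OF ij'] Ee[of j i] ij' Ms[OF fi] by auto
  qed (use Ec in auto)
  have Emod: "\<forall>i<m. \<forall>j<m. E $$ (i,j) mod 4 = n mod 4"
  proof (intro allI impI)
    fix i j assume ij: "i < m" "j < m"
    have fi: "f i < r" "f j < r" using fr ij by auto
    show "E $$ (i,j) mod 4 = n mod 4" using Ee[OF ij] Mmod fi n4 by auto
  qed
  have EC: "E \<in> frakC n m" unfolding frakC_def
    using Ec Esym pdi_from[OF Ec pE] Emod Ee by auto
  have Elead: "\<forall>i < dim_row M. \<forall>j < dim_row M. E $$ (i,j) = M $$ (i,j)"
  proof (intro allI impI)
    fix i j assume "i < dim_row M" "j < dim_row M"
    then have ij: "i < r" "j < r" using Mc by auto
    then have ij': "i < m" "j < m" using rm by auto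
    have "f i = i" "f j = j" using ij unfolding f_def by auto
    then show "E $$ (i,j) = M $$ (i,j)" using Ee[OF ij'] Mdiag ij by auto
  qed
  have "E \<in> frakE n M m" unfolding frakE_def using EC Elead by auto
  then show ?thesis using dT by auto
qed

end
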